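(* Let $n\ge0$. The space $\mathrm C^n(K,\mathcal D)^S$ is nontrivial (different from $\{0\}$) if and only if there exist an $n$-simplex $y\in\Sigma_n(K)$ and a nonzero function $f_0\in\mathcal D_{|y|}$ such that $f_0\circ s^{-1}=f_0$ for every $s$ in the stabilizer $S_y=\{s\in S:s(y)=y\}$.
   Context: $X$ is a spacetime, $S$ a group of conformal diffeomorphisms of $X$, and $K$ a base of the topology of $X$ consisting of open relatively compact subsets, globally invariant under $S$ ($s(o)\in K$ for $o\in K$, $s\in S$), ordered by inclusion. Simplices: $\Sigma_0(K)=K$; for $n\ge1$ an $n$-simplex is $x=(|x|;\partial_0x,\dots,\partial_nx)$ with $|x|\in K$, $\partial_ix\in\Sigma_{n-1}(K)$, $|\partial_ix|\subseteq|x|$ (for $n=1$, $|\partial_ix|=\partial_ix$), and, for $n\ge2$, $\partial_i\partial_jx=\partial_j\partial_{i+1}x$ for $i\ge j$. $S$ acts on simplices by applying $s$ to the support and recursively to the faces. $\mathcal D(X)$ is the space of real-valued compactly supported smooth functions on $X$ and, for $a\in K$, $\mathcal D_a$ is the subspace of functions vanishing outside the closure of $a$. $\mathrm C^n(K,\mathcal D)$ is the vector space of maps $f:\Sigma_n(K)\ni x\mapsto f_x\in\mathcal D_{|x|}$, with $S$-action $(sf)_x:=f_{s(x)}\circ s$, and $\mathrm C^n(K,\mathcal D)^S=\{f:(sf)_x=f_x\ \forall x,\ \forall s\in S\}$. *)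

theory Defs
  imports "HOL-Analysis.Analysis"
begin

text \<open>Simplices over a family K of open sets. A ksimplex is a support together with
  its list of faces; a 0-simplex u is represented as Simp u [].\<close>

datatype 'u ksimplex = Simp 'u "'u ksimplex list"

fun supp :: "'u ksimplex \<Rightarrow> 'u" where
  "supp (Simp u fs) = u"

fun face :: "nat \<Rightarrow> 'u ksimplex \<Rightarrow> 'u ksimplex" where
  "face i (Simp u fs) = fs ! i"

fun nfaces :: "'u ksimplex \<Rightarrow> nat" where
  "nfaces (Simp u fs) = length fs"

fun Sigma :: "'a set set \<Rightarrow> nat \<Rightarrow> 'a set ksimplex set" where
  "Sigma K 0 = {Simp u [] | u. u \<in> K}"
| "Sigma K (Suc n) =
     {x. supp x \<in> K \<and> nfaces x = n + 2 \<and>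
         (\<forall>i\<le>Suc n. face i x \<in> Sigma K n \<and> supp (face i x) \<subseteq> supp x) \<and>
         (n \<ge> 1 \<longrightarrow> (\<forall>i j. j \<le> i \<and> i \<le> n \<longrightarrow>
              face i (face j x) = face j (face (Suc i) x)))}"

definition act :: "('a \<Rightarrow> 'a) \<Rightarrow> 'a set ksimplex \<Rightarrow> 'a set ksimplex" where
  "act s x = map_ksimplex (\<lambda>u. s ` u) x"

definition Dsub :: "('a::topological_space \<Rightarrow> real) set \<Rightarrow> 'a set \<Rightarrow> ('a \<Rightarrow> real) set" where
  "Dsub D a = {f \<in> D. \<forall>p. p \<notin> closure a \<longrightarrow> f p = 0}"

definition Cochains :: "('a::topological_space \<Rightarrow> real) set \<Rightarrow> 'a set set \<Rightarrow> nat
     \<Rightarrow> ('a set ksimplex \<Rightarrow> 'a \<Rightarrow> real) set" where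
  "Cochains D K n = {f. (\<forall>x \<in> Sigma K n. f x \<in> Dsub D (supp x)) \<and>
                        (\<forall>x. x \<notin> Sigma K n \<longrightarrow> f x = (\<lambda>_. 0))}"

definition InvCochains :: "('a::topological_space \<Rightarrow> real) set \<Rightarrow> 'a set set \<Rightarrow> ('a \<Rightarrow> 'a) set
     \<Rightarrow> nat \<Rightarrow> ('a set ksimplex \<Rightarrow> 'a \<Rightarrow> real) set" where
  "InvCochains D K S n = {f \<in> Cochains D K n.
      \<forall>s \<in> S. \<forall>x \<in> Sigma K n. f (act s x) \<circ> s = f x}"

end

theory Submission
  imports Defs
begin

lemma act_comp: "act (s \<circ> t) x = act s (act t x)"
  unfolding act_def by (simp add: ksimplex.map_comp o_def image_comp)

lemma act_id: "act id x = x"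
  unfolding act_def by (simp add: ksimplex.map_id)

lemma supp_act: "supp (act s x) = s ` supp x"
  unfolding act_def by (cases x) simp

lemma nfaces_act: "nfaces (act s x) = nfaces x"
  unfolding act_def by (cases x) simp

lemma face_act: "i < nfaces x \<Longrightarrow> face i (act s x) = act s (face i x)"
  unfolding act_def by (cases x) simp

lemma Sigma_act:
  assumes "\<forall>u \<in> K. s ` u \<in> K"
  shows "x \<in> Sigma K n \<Longrightarrow> act s x \<in> Sigma K n"
proof (induction n arbitrary: x)
  case 0
  then obtain u where "x = Simp u []" "u \<in> K" by auto
  then show ?case using assms by (simp add: act_def)
next
  case (Suc n)
  have x: "supp x \<in> K" "nfaces x = n + 2"
    "\<And>i. i\<le>Suc n \<Longrightarrow> face i x \<in> Sigma K n \<and> supp (face i x) \<subseteq> supp x"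
    "n \<ge> 1 \<Longrightarrow> (\<And>i j. j \<le> i \<Longrightarrow> i \<le> n \<Longrightarrow> face i (face j x) = face j (face (Suc i) x))"
    using Suc.prems by auto
  have nf: "\<And>z. z \<in> Sigma K m \<Longrightarrow> m \<ge> 1 \<Longrightarrow> nfaces z = m + 1" for m
    by (cases m) auto
  show ?case
  proof (simp, intro conjI allI impI)
    show "supp (act s x) \<in> K" using x(1) assms by (simp add: supp_act)
    show "nfaces (act s x) = Suc (Suc n)" using x(2) by (simp add: nfaces_act)
    fix i assume i: "i \<le> Suc n"
    then have fi: "face i (act s x) = act s (face i x)" using x(2) by (intro face_act) simp
    show "face i (act s x) \<in> Sigma K n" using fi Suc.IH x(3)[OF i] by simp
    show "supp (face i (act s x)) \<subseteq> supp (act s x)" using fi x(3)[OF i] by (simp add: supp_act image_mono)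
  next
    fix i j assume n1: "Suc 0 \<le> n" and ji: "j \<le> i \<and> i \<le> n"
    have "i \<le> Suc n" "j \<le> Suc n" "Suc i \<le> Suc n" using ji by auto
    have A: "face j (act s x) = act s (face j x)" "face (Suc i) (act s x) = act s (face (Suc i) x)"
      using x(2) ji by (auto intro!: face_act)
    have nj: "nfaces (face j x) = n + 1" "nfaces (face (Suc i) x) = n + 1"
      using nf x(3) ji n1 by auto
    have "face i (face j (act s x)) = act s (face i (face j x))"
      using A nj ji by (simp add: face_act)
    also have "\<dots> = act s (face j (face (Suc i) x))" using x(4) n1 ji by simp
    also have "\<dots> = face j (face (Suc i) (act s x))"
      using A nj ji by (simp add: face_act)
    finally show "face i (face j (act s x)) = face j (face (Suc i) (act s x))" .
  qed
qed


theorem proposition4p10: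
  fixes S :: "('a::t2_space \<Rightarrow> 'a) set"
    and K :: "'a set set"
    and D :: "('a \<Rightarrow> real) set"
    and n :: nat
  assumes S_homeo: "\<forall>s \<in> S. homeomorphism UNIV UNIV s (inv s)"
    and S_id: "id \<in> S"
    and S_comp: "\<forall>s \<in> S. \<forall>t \<in> S. s \<circ> t \<in> S"
    and S_inv: "\<forall>s \<in> S. inv s \<in> S"
    and K_basis: "topological_basis K"
    and K_relcompact: "\<forall>u \<in> K. compact (closure u)"
    and K_invariant: "\<forall>s \<in> S. \<forall>u \<in> K. s ` u \<in> K"
    and D_fun: "\<forall>f \<in> D. continuous_on UNIV f \<and> compact (closure {p. f p \<noteq> 0})"
    and D_zero: "(\<lambda>_. 0) \<in> D"
    and D_add: "\<forall>f \<in> D. \<forall>g \<in> D. (\<lambda>p. f p + g p) \<in> D"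
    and D_scale: "\<forall>c::real. \<forall>f \<in> D. (\<lambda>p. c * f p) \<in> D"
    and D_invariant: "\<forall>s \<in> S. \<forall>f \<in> D. f \<circ> s \<in> D"
  shows "InvCochains D K S n \<noteq> {\<lambda>_ _. 0} \<longleftrightarrow>
         (\<exists>y \<in> Sigma K n. \<exists>f0 \<in> Dsub D (supp y). f0 \<noteq> (\<lambda>_. 0) \<and>
             (\<forall>s \<in> S. act s y = y \<longrightarrow> f0 \<circ> inv s = f0))"
  proof -
  have bij: "bij s" if "s \<in> S" for s
    using S_homeo that unfolding homeomorphism_def
    by (metis UNIV_I bij_betw_byWitness subsetI)
  have sinv: "s (inv s p) = p" "inv s (s p) = p" if "s \<in> S" for s p
    using bij[OF that] by (auto simp: bij_def surj_f_inv_f inv_f_f)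
  have sinvo: "s \<circ> inv s = id" "inv s \<circ> s = id" if "s \<in> S" for s
    using sinv[OF that] by auto
  have cont: "continuous_on UNIV s" if "s \<in> S" for s
    using S_homeo that unfolding homeomorphism_def by auto
  have zeroI: "(\<lambda>_ _. 0) \<in> InvCochains D K S n"
    unfolding InvCochains_def Cochains_def Dsub_def using D_zero by auto
  show ?thesis
  proof
    assume "InvCochains D K S n \<noteq> {\<lambda>_ _. 0}"
    then obtain f where f: "f \<in> InvCochains D K S n" "f \<noteq> (\<lambda>_ _. 0)" using zeroI by blast
    then obtain x where fx: "f x \<noteq> (\<lambda>_. 0)" by auto
    have xS: "x \<in> Sigma K n" using f fx unfolding InvCochains_def Cochains_def by auto
    show "\<exists>y \<in> Sigma K n. \<exists>f0 \<in> Dsub D (supp y). f0 \<noteq> (\<lambda>_. 0) \<and>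
             (\<forall>s \<in> S. act s y = y \<longrightarrow> f0 \<circ> inv s = f0)"
    proof (intro bexI conjI ballI impI)
      show "f x \<in> Dsub D (supp x)" using f xS unfolding InvCochains_def Cochains_def by auto
      show "f x \<noteq> (\<lambda>_. 0)" by fact
      fix s assume s: "s \<in> S" and "act s x = x"
      then have "f x \<circ> s = f x" using f xS s unfolding InvCochains_def by (metis (mono_tags, lifting) mem_Collect_eq)
      then have "f x \<circ> s \<circ> inv s = f x \<circ> inv s" by simp
      then show "f x \<circ> inv s = f x" using sinvo[OF s] by (simp add: o_assoc[symmetric])
    qed (rule xS)
  next
    assume "\<exists>y \<in> Sigma K n. \<exists>f0 \<in> Dsub D (supp y). f0 \<noteq> (\<lambda>_. 0) \<and>
             (\<forall>s \<in> S. act s y = y \<longrightarrow> f0 \<circ> inv s = f0)"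
    then obtain y f0 where y: "y \<in> Sigma K n" and f0: "f0 \<in> Dsub D (supp y)" "f0 \<noteq> (\<lambda>_. 0)"
      and stab: "\<And>s. s \<in> S \<Longrightarrow> act s y = y \<Longrightarrow> f0 \<circ> inv s = f0" by blast
    have inv_comp: "inv (s \<circ> t) = inv t \<circ> inv s" if "s \<in> S" "t \<in> S" for s t
      using bij that by (simp add: o_inv_distrib)
    have wd: "f0 \<circ> inv s = f0 \<circ> inv t" if st: "s \<in> S" "t \<in> S" "act s y = act t y" for s t
    proof -
      have r: "inv t \<circ> s \<in> S" using S_comp S_inv st by auto
      have "act (inv t \<circ> s) y = act (inv t) (act t y)" using st by (simp add: act_comp)
      also have "\<dots> = y" using sinvo(2)[OF st(2)] by (simp add: act_comp[symmetric] act_id)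
      finally have "f0 \<circ> inv (inv t \<circ> s) = f0" using stab r by blast
      moreover have "inv (inv t \<circ> s) = inv s \<circ> t"
        using inv_comp[OF S_inv[rule_format, OF st(2)] st(1)] bij[OF st(2)]
        by (simp add: inv_inv_eq)
      ultimately have "f0 \<circ> inv s \<circ> t = f0" by (simp add: o_assoc)
      then have "f0 \<circ> inv s \<circ> t \<circ> inv t = f0 \<circ> inv t" by simp
      then show ?thesis using sinvo(1)[OF st(2)] by (simp add: o_assoc[symmetric])
    qed
    define orb where "orb x \<longleftrightarrow> (\<exists>t\<in>S. x = act t y)" for x
    define f where "f x = (if x \<in> Sigma K n \<and> orb x then f0 \<circ> inv (SOME t. t \<in> S \<and> x = act t y) else (\<lambda>_. 0))" for x
    have fval: "f (act t y) = f0 \<circ> inv t" if t: "t \<in> S" for t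
    proof -
      have in1: "act t y \<in> Sigma K n" using Sigma_act K_invariant t y by blast
      have o: "orb (act t y)" using t unfolding orb_def by blast
      let ?u = "SOME u. u \<in> S \<and> act t y = act u y"
      have "?u \<in> S \<and> act t y = act ?u y" by (rule someI[of _ t]) (use t in auto)
      then have "f0 \<circ> inv ?u = f0 \<circ> inv t" using wd t by metis
      then show ?thesis unfolding f_def using in1 o by simp
    qed
    have fD: "f x \<in> Dsub D (supp x)" if "x \<in> Sigma K n" for x
    proof (cases "orb x")
      case True
      then obtain t where t: "t \<in> S" "x = act t y" unfolding orb_def by blast
      have "f0 \<circ> inv t \<in> D" using D_invariant S_inv t(1) f0(1) unfolding Dsub_def by auto
      moreover have "(f0 \<circ> inv t) p = 0" if p: "p \<notin> closure (t ` supp y)" for p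
      proof -
        have "inv t p \<notin> closure (supp y)"
        proof
          assume "inv t p \<in> closure (supp y)"
          then have "t (inv t p) \<in> t ` closure (supp y)" by blast
          also have "\<dots> \<subseteq> closure (t ` supp y)"
            using image_closure_subset[OF continuous_on_subset[OF cont[OF t(1)]] closed_closure, of "supp y" "t ` supp y"] closure_subset by blast
          finally show False using p sinv[OF t(1)] by simp
        qed
        then show ?thesis using f0(1) unfolding Dsub_def by auto
      qed
      ultimately show ?thesis using t fval by (simp add: Dsub_def supp_act)
    next
      case False
      then show ?thesis using D_zero unfolding f_def Dsub_def by auto
    qed
    have finv: "f (act s x) \<circ> s = f x" if s: "s \<in> S" and x: "x \<in> Sigma K n" for s x
    proof (cases "orb x")
      case True
      then obtain t where t: "t \<in> S" "x = act t y" unfolding orb_def by blast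
      have st: "s \<circ> t \<in> S" using S_comp s t by auto
      have "f (act s x) = f0 \<circ> inv (s \<circ> t)" using fval[OF st] t by (simp add: act_comp)
      also have "\<dots> = f0 \<circ> inv t \<circ> inv s" using inv_comp[OF s t(1)] by (simp add: o_assoc)
      finally have "f (act s x) \<circ> s = f0 \<circ> inv t \<circ> (inv s \<circ> s)" by (simp add: o_assoc)
      then show ?thesis using sinvo(2)[OF s] fval[OF t(1)] t(2) by simp
    next
      case False
      have "\<not> orb (act s x)"
      proof
        assume "orb (act s x)"
        then obtain t where t: "t \<in> S" "act s x = act t y" unfolding orb_def by blast
        have "x = act (inv s) (act s x)" using sinvo(2)[OF s] by (simp add: act_comp[symmetric] act_id)
        also have "\<dots> = act (inv s \<circ> t) y" using t by (simp add: act_comp)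
        finally show False using False S_comp S_inv s t(1) unfolding orb_def by blast
      qed
      then show ?thesis using False unfolding f_def by auto
    qed
    have fI: "f \<in> InvCochains D K S n"
      unfolding InvCochains_def Cochains_def using fD finv by (auto simp: f_def)
    have "f y = f0" using fval[OF S_id] by (simp add: act_id)
    then have "f \<noteq> (\<lambda>_ _. 0)" using f0(2) by auto
    then show "InvCochains D K S n \<noteq> {\<lambda>_ _. 0}" using fI by blast
  qed
qed


end
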